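(* Let $(N_n)_{n\in\mathbb{N}}$ be a strictly increasing sequence of natural numbers and let $f_n:\ell_1\to\mathbb{R}$ be defined as below. Then $f_n \geq 0$ for every $n \in \mathbb{N}$ and $f_n \wedge f_l = 0$ for all $n \neq l$.
   Context: Identify $c_0^*=\ell_1$ and write $x^*=(x^*_1,x^*_2,\ldots)$. For $n<m$ let $g_{nm}: \ell_1 \to [0,1]$ be any continuous function such that $g_{nm}(x^* ) = 0$ if $N_m|x_n^*| \leq |x_m^*|$, $g_{nm}(x^* ) = 1$ if $|x_m^*| \leq (N_m-1)|x_n^*|$, and $g_{nm}(x^* )=g_{nm}(x^*/\|x^*\|)$ whenever $x^* \neq 0$. Define $$f_n(x^* ) = \big(|x_n^*|-N_n\max\{|x_m^*| : m<n\}\big)^+ \cdot \prod_{m > n}g_{nm}(x^* ),$$ where $r^+=\max\{r,0\}$ and the max over the empty set is $0$. Order and lattice operations are pointwise. *)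

theory Defs
  imports "HOL-Analysis.Analysis"
begin

text \<open>The space ell_1 = c_0^*, realised as absolutely summable real sequences
  indexed by nat (index 0 plays the role of the first coordinate).\<close>

definition l1 :: "(nat \<Rightarrow> real) set" where
  "l1 = {x. summable (\<lambda>k. \<bar>x k\<bar>)}"

definition l1norm :: "(nat \<Rightarrow> real) \<Rightarrow> real" where
  "l1norm x = (\<Sum>k. \<bar>x k\<bar>)"

definition l1_continuous_on :: "(nat \<Rightarrow> real) set \<Rightarrow> ((nat \<Rightarrow> real) \<Rightarrow> real) \<Rightarrow> bool" where
  "l1_continuous_on S g \<longleftrightarrow>
     (\<forall>x\<in>S. \<forall>e>0. \<exists>d>0. \<forall>y\<in>S. l1norm (\<lambda>k. y k - x k) < d \<longrightarrow> \<bar>g y - g x\<bar> < e)"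

text \<open>max over the empty set is 0\<close>
definition prevmax :: "(nat \<Rightarrow> real) \<Rightarrow> nat \<Rightarrow> real" where
  "prevmax x n = (if n = 0 then 0 else Max ((\<lambda>m. \<bar>x m\<bar>) ` {..<n}))"

definition fdef :: "(nat \<Rightarrow> nat) \<Rightarrow> (nat \<Rightarrow> nat \<Rightarrow> (nat \<Rightarrow> real) \<Rightarrow> real)
                     \<Rightarrow> nat \<Rightarrow> (nat \<Rightarrow> real) \<Rightarrow> real" where
  "fdef N g n x = max (\<bar>x n\<bar> - real (N n) * prevmax x n) 0 *
                  prodinf (\<lambda>k. g n (n + 1 + k) x)"

end

theory Submission
  imports Defs
begin

lemma prevmax_nonneg: "prevmax x n \<ge> 0"
proof (cases "n = 0")
  case False
  hence "\<bar>x 0\<bar> \<le> Max ((\<lambda>m. \<bar>x m\<bar>) ` {..<n})" by (intro Max_ge) auto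
  thus ?thesis using False unfolding prevmax_def by (smt (verit) abs_ge_zero)
qed (simp add: prevmax_def)
lemma prevmax_ge: "m < n \<Longrightarrow> \<bar>x m\<bar> \<le> prevmax x n"
  unfolding prevmax_def by (auto intro: Max_ge)

lemma ev_small:
  assumes "x \<in> l1" "0 < (c::real)"
  shows "\<exists>K. \<forall>k\<ge>K. \<bar>x k\<bar> \<le> c"
proof -
  have "summable (\<lambda>k. \<bar>x k\<bar>)" using assms(1) by (simp add: l1_def)
  hence "(\<lambda>k. \<bar>x k\<bar>) \<longlonglongrightarrow> 0" by (rule summable_LIMSEQ_zero)
  hence "eventually (\<lambda>k. dist \<bar>x k\<bar> 0 < c) sequentially" using assms(2) tendstoD by blast
  then obtain K where "\<forall>k\<ge>K. dist \<bar>x k\<bar> 0 < c" by (auto simp: eventually_sequentially)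
  thus ?thesis by (intro exI[of _ K]) auto
qed

theorem mainTheorem7:
  fixes N :: "nat \<Rightarrow> nat"
    and g :: "nat \<Rightarrow> nat \<Rightarrow> (nat \<Rightarrow> real) \<Rightarrow> real"
  assumes N_mono: "strict_mono N"
    and g_range: "\<And>n m x. n < m \<Longrightarrow> x \<in> l1 \<Longrightarrow> 0 \<le> g n m x \<and> g n m x \<le> 1"
    and g_cont: "\<And>n m. n < m \<Longrightarrow> l1_continuous_on {x \<in> l1. x n \<noteq> 0} (g n m)"
    and g_zero: "\<And>n m x. n < m \<Longrightarrow> x \<in> l1 \<Longrightarrow> x n \<noteq> 0 \<Longrightarrow>
                   real (N m) * \<bar>x n\<bar> \<le> \<bar>x m\<bar> \<Longrightarrow> g n m x = 0"
    and g_one: "\<And>n m x. n < m \<Longrightarrow> x \<in> l1 \<Longrightarrow> x n \<noteq> 0 \<Longrightarrow>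
                   \<bar>x m\<bar> \<le> (real (N m) - 1) * \<bar>x n\<bar> \<Longrightarrow> g n m x = 1"
    and g_hom: "\<And>n m x. n < m \<Longrightarrow> x \<in> l1 \<Longrightarrow> (\<exists>k. x k \<noteq> 0) \<Longrightarrow>
                   g n m x = g n m (\<lambda>k. x k / l1norm x)"
  shows "(\<forall>n. \<forall>x\<in>l1. 0 \<le> fdef N g n x) \<and>
         (\<forall>n l. n \<noteq> l \<longrightarrow> (\<forall>x\<in>l1. min (fdef N g n x) (fdef N g l x) = 0))"
proof -
  have fin: "\<exists>K\<ge>M. prodinf (\<lambda>k. g n (n + 1 + k) x) = (\<Prod>k\<in>{..<K}. g n (n + 1 + k) x)"
    if x: "x \<in> l1" and xn: "x n \<noteq> 0" for n x M
  proof -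
    obtain K0 where K0: "\<forall>k\<ge>K0. \<bar>x k\<bar> \<le> \<bar>x n\<bar>" using ev_small[OF x] xn by force
    define K where "K = K0 + 2 + M"
    have one: "g n (n + 1 + k) x = 1" if "k \<notin> {..<K}" for k
    proof -
      let ?m = "n + 1 + k"
      have "?m \<le> N ?m" using N_mono by (rule strict_mono_imp_increasing)
      moreover have "k \<ge> K" using that by auto
      ultimately have "N ?m \<ge> 2" unfolding K_def by linarith
      hence "real (N ?m) - 1 \<ge> 1" by simp
      moreover have "\<bar>x ?m\<bar> \<le> \<bar>x n\<bar>" using K0 \<open>k \<ge> K\<close> unfolding K_def by auto
      ultimately have "\<bar>x ?m\<bar> \<le> (real (N ?m) - 1) * \<bar>x n\<bar>"
        using mult_right_mono[OF \<open>real (N ?m) - 1 \<ge> 1\<close> abs_ge_zero[of "x n"]] by linarith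
      thus ?thesis using g_one[of n ?m x] x xn by simp
    qed
    have "prodinf (\<lambda>k. g n (n + 1 + k) x) = (\<Prod>k\<in>{..<K}. g n (n + 1 + k) x)"
      by (rule prodinf_finite[OF finite_lessThan one])
    moreover have "K \<ge> M" unfolding K_def by simp
    ultimately show ?thesis by blast
  qed
  have nonneg: "0 \<le> fdef N g n x" if x: "x \<in> l1" for n x
  proof (cases "x n = 0")
    case True
    have "prevmax x n \<ge> 0" by (rule prevmax_nonneg)
    hence "max (\<bar>x n\<bar> - real (N n) * prevmax x n) 0 = 0" using True by auto
    thus ?thesis unfolding fdef_def by simp
  next
    case False
    then obtain K where K: "prodinf (\<lambda>k. g n (n + 1 + k) x) = (\<Prod>k\<in>{..<K}. g n (n + 1 + k) x)"
      using fin x by blast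
    have "0 \<le> (\<Prod>k\<in>{..<K}. g n (n + 1 + k) x)" by (rule prod_nonneg) (use g_range x in auto)
    thus ?thesis unfolding fdef_def K by simp
  qed
  have disj: "fdef N g n x = 0 \<or> fdef N g l x = 0" if x: "x \<in> l1" and nl: "n < l" for n l x
  proof (rule ccontr)
    assume "\<not> ?thesis"
    hence A: "fdef N g n x \<noteq> 0" and B: "fdef N g l x \<noteq> 0" by simp_all
    from B have "max (\<bar>x l\<bar> - real (N l) * prevmax x l) 0 \<noteq> 0" unfolding fdef_def by (metis mult_zero_left)
    hence C: "\<bar>x l\<bar> > real (N l) * prevmax x l" by linarith
    have "\<bar>x n\<bar> \<le> prevmax x l" using nl by (rule prevmax_ge)
    hence "real (N l) * \<bar>x n\<bar> \<le> real (N l) * prevmax x l" by (simp add: mult_left_mono)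
    with C have D: "real (N l) * \<bar>x n\<bar> \<le> \<bar>x l\<bar>" by linarith
    have xn: "x n \<noteq> 0"
    proof
      assume "x n = 0"
      have "prevmax x n \<ge> 0" by (rule prevmax_nonneg)
      hence "max (\<bar>x n\<bar> - real (N n) * prevmax x n) 0 = 0" using \<open>x n = 0\<close> by auto
      thus False using A unfolding fdef_def by simp
    qed
    have g0: "g n l x = 0" using g_zero[OF nl x xn D] .
    obtain K where K: "prodinf (\<lambda>k. g n (n + 1 + k) x) = (\<Prod>k\<in>{..<K}. g n (n + 1 + k) x)"
      and KL: "K \<ge> l" using fin[OF x xn, of l] by blast
    have "(\<Prod>k\<in>{..<K}. g n (n + 1 + k) x) = 0"
    proof -
      have "l - (n+1) \<in> {..<K}" using KL nl by auto
      moreover have "g n (n + 1 + (l - (n+1))) x = 0" using g0 nl by simp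
      ultimately show ?thesis by (intro prod_zero[OF finite_lessThan] bexI[of _ "l - (n+1)"])
    qed
    thus False using A unfolding fdef_def K by simp
  qed
  show ?thesis
  proof (intro conjI allI impI ballI)
    fix n x assume "x \<in> l1" thus "0 \<le> fdef N g n x" by (rule nonneg)
  next
    fix n l :: nat and x assume "n \<noteq> l" "x \<in> l1"
    hence "fdef N g n x = 0 \<or> fdef N g l x = 0"
      using disj[of x n l] disj[of x l n] by (cases "n < l") auto
    thus "min (fdef N g n x) (fdef N g l x) = 0" using nonneg[OF \<open>x \<in> l1\<close>, of n] nonneg[OF \<open>x \<in> l1\<close>, of l] by auto
  qed
qed

end
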